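(* Let $\psi\in\mathcal K$ have radius of convergence $R_\psi>0$ and let $g$ be the solution of Lagrange's equation $g(z)=z\psi(g(z))$. For $t\in(0,R_\psi)$ put $\psi_t(z)=\psi(tz)/\psi(t)$ and let $g_t$ be the power series solving $g_t(z)=z\psi_t(g_t(z))$. Then for $t\in(0,R_\psi)$, $$g_t(z)=\frac{g(tz/\psi(t))}{t}\qquad\text{for all }|z|\le1.$$ The holomorphic function $g_t$ is continuous on $\partial\mathbb D$ and satisfies $g_t(\mathbb D)\subset\mathbb D$. Moreover, $g_t$ is the probability generating function of $Z_{t/\psi(t)}$ whenever either $\psi\in\mathcal K^\star$ and $t\in[0,\tau]$, or $\psi\in\mathcal K\setminus\mathcal K^\star$ and $t\in(0,R_\psi)$, where $(Z_s)$ is the Khinchin family of $g$.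
   Context: $\mathcal K$ is the class of non-constant power series $f(z)=\sum_{n\ge0}a_nz^n$ with positive radius of convergence $R$, non-negative coefficients and $a_0>0$; its Khinchin family $(X_t)$ is given by $\mathbf P(X_t=n)=a_nt^n/f(t)$ ($n\ge0$, $t\in(0,R)$), $X_0\equiv 0$, with mean $m_f(t)=tf'(t)/f(t)$; thus $\psi_t$ is the probability generating function of the Khinchin family variable $Y_t$ of $\psi$. For $t=0$ one sets $\psi_0\equiv1$ and $g_0(z)=z$. $\mathcal K^\star$ is the subclass with $\lim_{t\uparrow R}m_f(t)>1$, with apex $\tau$ the unique point where $m_\psi(\tau)=1$. The solution $g(z)=\sum_{n\ge1}A_nz^n$ of Lagrange's equation has non-negative coefficients, $A_1=\psi(0)$; for $\psi\in\mathcal K^\star$ its radius of convergence is $\rho=\tau/\psi(\tau)$, it converges on the closed disk $\overline{\mathbb D(0,\rho)}$ and $g(\rho)=\tau$. The Khinchin family $(Z_s)$ of $g$ is $\mathbf P(Z_s=n)=A_ns^n/g(s)$, $n\ge1$ (including $s=\rho$ when $\psi\in\mathcal K^\star$; $Z_0$ is the point mass at $1$). $\mathbb D$ is the open unit disk. *)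

theory Defs
  imports "HOL-Analysis.Analysis" "HOL-Computational_Algebra.Formal_Power_Series"
begin

definition ps_eval :: "(nat \<Rightarrow> real) \<Rightarrow> 'a::{real_normed_field,banach} \<Rightarrow> 'a" where
  "ps_eval c x = (\<Sum>n. of_real (c n) * x ^ n)"

definition in_K :: "(nat \<Rightarrow> real) \<Rightarrow> bool" where
  "in_K a \<longleftrightarrow> (\<forall>n. a n \<ge> 0) \<and> a 0 > 0 \<and> (\<exists>n>0. a n \<noteq> 0) \<and> conv_radius a > 0"

definition kh_mean :: "(nat \<Rightarrow> real) \<Rightarrow> real \<Rightarrow> real" where
  "kh_mean a t = t * deriv (\<lambda>x::real. ps_eval a x) t / ps_eval a t"

definition R_filter :: "(nat \<Rightarrow> real) \<Rightarrow> real filter" where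
  "R_filter a = (if conv_radius a = \<infinity> then at_top else at_left (real_of_ereal (conv_radius a)))"

definition K_star :: "(nat \<Rightarrow> real) \<Rightarrow> bool" where
  "K_star a \<longleftrightarrow> in_K a \<and> Lim (R_filter a) (\<lambda>t. ereal (kh_mean a t)) > 1"

definition lagrange_sol :: "(nat \<Rightarrow> real) \<Rightarrow> real fps" where
  "lagrange_sol c = (THE G. fps_nth G 0 = 0 \<and> G = fps_X * fps_compose (Abs_fps c) G)"

definition psi_t :: "(nat \<Rightarrow> real) \<Rightarrow> real \<Rightarrow> nat \<Rightarrow> real" where
  "psi_t a t = (\<lambda>n. a n * t ^ n / ps_eval a t)"

definition kh_prob_g :: "(nat \<Rightarrow> real) \<Rightarrow> real \<Rightarrow> nat \<Rightarrow> real" where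
  "kh_prob_g A s n = (if s = 0 then (if n = 1 then 1 else 0) else A n * s ^ n / ps_eval A s)"

end

theory Submission
  imports Defs "HOL-Computational_Algebra.Polynomial_FPS"
begin

no_notation vec_nth (infixl \<open>$\<close> 90)
unbundle fps_syntax


lemma pow_agree:
  fixes F G :: "'a::comm_semiring_1 fps"
  assumes "\<forall>k\<le>n. F $ k = G $ k" "m \<le> n"
  shows "(F^i) $ m = (G^i) $ m"
  using assms(2)
proof (induction i arbitrary: m)
  case 0 then show ?case by simp
next
  case (Suc i)
  have "(F^Suc i) $ m = (\<Sum>j=0..m. F $ j * (F^i) $ (m-j))" by (simp add: fps_mult_nth)
  also have "\<dots> = (\<Sum>j=0..m. G $ j * (G^i) $ (m-j))"
    using Suc assms(1) by (intro sum.cong refl) auto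
  also have "\<dots> = (G^Suc i) $ m" by (simp add: fps_mult_nth)
  finally show ?case .
qed

lemma pow_nonneg:
  fixes F :: "real fps"
  assumes "\<And>k. F $ k \<ge> 0"
  shows "(F^i) $ m \<ge> 0"
proof (induction i arbitrary: m)
  case 0 then show ?case by simp
next
  case (Suc i)
  show ?case using Suc assms by (simp add: fps_mult_nth sum_nonneg)
qed

lemma pow_mono:
  fixes F G :: "real fps"
  assumes "\<And>k. 0 \<le> F $ k" "\<And>k. F $ k \<le> G $ k"
  shows "(F^i) $ m \<le> (G^i) $ m"
proof (induction i arbitrary: m)
  case 0 then show ?case by simp
next
  case (Suc i)
  have "(F^Suc i) $ m = (\<Sum>j=0..m. F $ j * (F^i) $ (m-j))" by (simp add: fps_mult_nth)
  also have "\<dots> \<le> (\<Sum>j=0..m. G $ j * (G^i) $ (m-j))"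
    using Suc assms pow_nonneg[of F] order_trans[OF assms(1) assms(2)] by (intro sum_mono mult_mono) auto
  also have "\<dots> = (G^Suc i) $ m" by (simp add: fps_mult_nth)
  finally show ?case .
qed

lemma pow_zero_low:
  fixes G :: "'a::comm_semiring_1 fps"
  assumes "G $ 0 = 0"
  shows "m < i \<Longrightarrow> (G^i) $ m = 0"
proof (induction i arbitrary: m)
  case 0 then show ?case by simp
next
  case (Suc i)
  have "(G^Suc i) $ m = (\<Sum>j=0..m. G $ j * (G^i) $ (m-j))" by (simp add: fps_mult_nth)
  also have "\<dots> = 0"
  proof (intro sum.neutral ballI)
    fix j assume "j \<in> {0..m}"
    show "G $ j * (G^i) $ (m-j) = 0"
    proof (cases j)
      case (Suc j')
      then have "m - j < i" using \<open>m < Suc i\<close> \<open>j \<in> {0..m}\<close> by auto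
      then show ?thesis using Suc.IH by simp
    qed (use assms in simp)
  qed
  finally show ?case .
qed

lemma pow_scale:
  fixes G H :: "'a::comm_semiring_1 fps"
  assumes "\<And>k. H $ k = \<alpha> * \<beta>^k * G $ k"
  shows "(H^i) $ m = \<alpha>^i * \<beta>^m * (G^i) $ m"
proof (induction i arbitrary: m)
  case 0 then show ?case by simp
next
  case (Suc i)
  have "(H^Suc i) $ m = (\<Sum>j=0..m. H $ j * (H^i) $ (m-j))" by (simp add: fps_mult_nth)
  also have "\<dots> = (\<Sum>j=0..m. \<alpha>^Suc i * \<beta>^m * (G $ j * (G^i) $ (m-j)))"
  proof (intro sum.cong refl)
    fix j assume j: "j \<in> {0..m}"
    then have "\<beta>^m = \<beta>^j * \<beta>^(m-j)" by (simp add: power_add[symmetric])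
    then show "H $ j * (H^i) $ (m-j) = \<alpha>^Suc i * \<beta>^m * (G $ j * (G^i) $ (m-j))"
      using Suc assms by (simp add: algebra_simps)
  qed
  also have "\<dots> = \<alpha>^Suc i * \<beta>^m * (G^Suc i) $ m"
    by (simp add: fps_mult_nth sum_distrib_left)
  finally show ?case .
qed

definition is_lsol :: "'a::comm_semiring_1 fps \<Rightarrow> 'a fps \<Rightarrow> bool" where
  "is_lsol C G \<longleftrightarrow> G $ 0 = 0 \<and> G = fps_X * fps_compose C G"

lemma is_lsol_iff:
  "is_lsol C G \<longleftrightarrow> G $ 0 = 0 \<and> (\<forall>n. G $ Suc n = (\<Sum>i=0..n. C $ i * (G^i) $ n))"
proof
  assume "is_lsol C G"
  then have "G $ 0 = 0" "G = fps_X * fps_compose C G" by (auto simp: is_lsol_def)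
  moreover have "G $ Suc n = (\<Sum>i=0..n. C $ i * (G^i) $ n)" for n
    by (subst \<open>G = _\<close>) (simp add: fps_compose_nth)
  ultimately show "G $ 0 = 0 \<and> (\<forall>n. G $ Suc n = (\<Sum>i=0..n. C $ i * (G^i) $ n))" by blast
next
  assume H: "G $ 0 = 0 \<and> (\<forall>n. G $ Suc n = (\<Sum>i=0..n. C $ i * (G^i) $ n))"
  have "G = fps_X * fps_compose C G"
  proof (rule fps_ext)
    fix n show "G $ n = (fps_X * fps_compose C G) $ n"
      using H by (cases n) (auto simp: fps_compose_nth)
  qed
  with H show "is_lsol C G" by (simp add: is_lsol_def)
qed

lemma is_lsol_unique:
  assumes "is_lsol C G" "is_lsol C H"
  shows "G = H"
proof -
  have "\<forall>k\<le>n. G $ k = H $ k" for n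
  proof (induction n)
    case 0 then show ?case using assms by (simp add: is_lsol_iff)
  next
    case (Suc n)
    have "G $ Suc n = H $ Suc n"
      using assms pow_agree[OF Suc.IH] by (simp add: is_lsol_iff)
    with Suc show ?case by (auto simp: le_Suc_eq)
  qed
  then show ?thesis by (intro fps_ext) auto
qed

primrec lit :: "'a::comm_semiring_1 fps \<Rightarrow> nat \<Rightarrow> 'a fps" where
  "lit C 0 = 0"
| "lit C (Suc k) = fps_X * fps_compose C (lit C k)"

lemma lit_step: "m \<le> k \<Longrightarrow> lit C k $ m = lit C (Suc k) $ m"
proof (induction k arbitrary: m)
  case 0 then show ?case by simp
next
  case (Suc k)
  show ?case
  proof (cases m)
    case 0 then show ?thesis by simp
  next
    case (Suc m')
    with Suc.prems have "m' \<le> k" by simp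
    have "\<forall>j\<le>m'. lit C k $ j = lit C (Suc k) $ j" using Suc.IH \<open>m' \<le> k\<close> by auto
    then have "(\<Sum>i=0..m'. C $ i * (lit C k ^ i) $ m') = (\<Sum>i=0..m'. C $ i * (lit C (Suc k) ^ i) $ m')"
      by (intro sum.cong refl arg_cong2[where f="(*)"] pow_agree[of m']) auto
    moreover have "lit C (Suc k) $ m = (\<Sum>i=0..m'. C $ i * (lit C k ^ i) $ m')"
      using \<open>m = Suc m'\<close> by (simp only: lit.simps fps_X_mult_nth fps_compose_nth) simp
    moreover have "lit C (Suc (Suc k)) $ m = (\<Sum>i=0..m'. C $ i * (lit C (Suc k) ^ i) $ m')"
      using \<open>m = Suc m'\<close> by (simp only: lit.simps(2)[of C "Suc k"] fps_X_mult_nth fps_compose_nth) simp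
    ultimately show ?thesis by simp
  qed
qed

lemma lit_stable: "m \<le> k \<Longrightarrow> lit C (k + d) $ m = lit C k $ m"
proof (induction d)
  case (Suc d)
  have "lit C (k + Suc d) $ m = lit C (k + d) $ m"
    using lit_step[of m "k+d" C] \<open>m \<le> k\<close> by simp
  with Suc show ?case by simp
qed simp

definition lsol :: "'a::comm_semiring_1 fps \<Rightarrow> 'a fps" where
  "lsol C = Abs_fps (\<lambda>n. lit C n $ n)"

lemma lsol_agree: "m \<le> n \<Longrightarrow> lsol C $ m = lit C n $ m"
  using lit_stable[of m m C "n - m"] by (simp add: lsol_def)

lemma lsol_is: "is_lsol C (lsol C)"
  unfolding is_lsol_iff
proof
  show "lsol C $ 0 = 0" by (simp add: lsol_def)
  show "\<forall>n. lsol C $ Suc n = (\<Sum>i = 0..n. C $ i * (lsol C ^ i) $ n)"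
  proof
    fix n
    have "lsol C $ Suc n = lit C (Suc n) $ Suc n" by (simp add: lsol_def)
    also have "\<dots> = (\<Sum>i = 0..n. C $ i * (lit C n ^ i) $ n)" by (simp add: fps_compose_nth)
    also have "\<dots> = (\<Sum>i = 0..n. C $ i * (lsol C ^ i) $ n)"
      by (intro sum.cong refl arg_cong2[where f="(*)"] pow_agree[of n]) (auto simp: lsol_agree)
    finally show "lsol C $ Suc n = (\<Sum>i = 0..n. C $ i * (lsol C ^ i) $ n)" .
  qed
qed

lemma lagrange_sol_eq: "lagrange_sol c = lsol (Abs_fps c)"
  unfolding lagrange_sol_def
  using lsol_is[of "Abs_fps c"] is_lsol_unique[of "Abs_fps c"]
  by (intro the_equality) (auto simp: is_lsol_def)

lemma lagrange_sol_unique: "is_lsol (Abs_fps c) G \<Longrightarrow> lagrange_sol c = G"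
  using lsol_is[of "Abs_fps c"] is_lsol_unique[of "Abs_fps c"] lagrange_sol_eq by metis

lemma lagrange_sol_is: "is_lsol (Abs_fps c) (lagrange_sol c)"
  using lsol_is lagrange_sol_eq by metis

lemma lit_nonneg:
  fixes c :: "nat \<Rightarrow> real"
  assumes "\<And>n. c n \<ge> 0"
  shows "lit (Abs_fps c) k $ m \<ge> 0"
proof (induction k arbitrary: m)
  case 0 then show ?case by simp
next
  case (Suc k)
  then show ?case using assms pow_nonneg[of "lit (Abs_fps c) k"]
    by (cases m) (auto simp: fps_compose_nth intro!: sum_nonneg)
qed

lemma lagrange_sol_nonneg:
  fixes c :: "nat \<Rightarrow> real"
  assumes "\<And>n. c n \<ge> 0"
  shows "lagrange_sol c $ n \<ge> 0"
  using lit_nonneg[OF assms] by (simp add: lagrange_sol_eq lsol_def)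

lemma lagrange_sol_0: "lagrange_sol c $ 0 = 0"
  using lagrange_sol_is[of c] by (simp add: is_lsol_def)

lemma lagrange_sol_Suc: "lagrange_sol c $ Suc n = (\<Sum>i=0..n. c i * (lagrange_sol c ^ i) $ n)"
  using lagrange_sol_is[of c] by (simp add: is_lsol_iff)

definition Ptr :: "(nat \<Rightarrow> real) \<Rightarrow> nat \<Rightarrow> real poly" where
  "Ptr A N = (\<Sum>n\<le>N. monom (A n) n)"

definition Qp :: "(nat \<Rightarrow> real) \<Rightarrow> (nat \<Rightarrow> real) \<Rightarrow> nat \<Rightarrow> nat \<Rightarrow> real poly" where
  "Qp c A N M = pCons 0 (\<Sum>k\<le>M. smult (c k) (Ptr A N ^ k))"

lemma coeff_Ptr: "coeff (Ptr A N) k = (if k \<le> N then A k else 0)"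
  by (simp add: Ptr_def coeff_sum coeff_monom)

lemma poly_Ptr: "poly (Ptr A N) x = (\<Sum>n\<le>N. A n * x^n)"
  by (simp add: Ptr_def poly_sum poly_monom)

lemma poly_Qp: "poly (Qp c A N M) x = x * (\<Sum>k\<le>M. c k * poly (Ptr A N) x ^ k)"
  by (simp add: Qp_def poly_sum poly_power)

lemma coeff_Qp_0: "coeff (Qp c A N M) 0 = 0"
  by (simp add: Qp_def)

lemma coeff_Qp_Suc: "coeff (Qp c A N M) (Suc m) = (\<Sum>k\<le>M. c k * (fps_of_poly (Ptr A N) ^ k) $ m)"
  by (simp add: Qp_def coeff_sum fps_of_poly_power[symmetric])

lemma poly_sum_upto:
  fixes p :: "real poly"
  assumes "degree p \<le> D"
  shows "poly p x = (\<Sum>i\<le>D. coeff p i * x ^ i)"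
proof -
  have "poly p x = (\<Sum>i\<le>degree p. coeff p i * x ^ i)" by (rule poly_altdef)
  also have "\<dots> = (\<Sum>i\<le>D. coeff p i * x ^ i)"
    by (rule sum.mono_neutral_left) (use assms le_degree in auto)
  finally show ?thesis .
qed

lemma poly_le_poly:
  fixes p q :: "real poly"
  assumes "\<And>n. coeff p n \<le> coeff q n" "0 \<le> x"
  shows "poly p x \<le> poly q x"
proof -
  define D where "D = max (degree p) (degree q)"
  have "poly p x = (\<Sum>i\<le>D. coeff p i * x ^ i)" by (rule poly_sum_upto) (simp add: D_def)
  also have "\<dots> \<le> (\<Sum>i\<le>D. coeff q i * x ^ i)"
    using assms by (intro sum_mono mult_right_mono) auto
  also have "\<dots> = poly q x" by (rule poly_sum_upto[symmetric]) (simp add: D_def)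
  finally show ?thesis .
qed

lemma poly_le_suminf:
  fixes p :: "real poly"
  assumes "\<And>n. coeff p n \<le> A n" "\<And>n. 0 \<le> A n" "0 \<le> x" "summable (\<lambda>n. A n * x^n)"
  shows "poly p x \<le> (\<Sum>n. A n * x^n)"
proof -
  have "poly p x = (\<Sum>i\<le>degree p. coeff p i * x ^ i)" by (rule poly_altdef)
  also have "\<dots> \<le> (\<Sum>i\<le>degree p. A i * x ^ i)"
    using assms by (intro sum_mono mult_right_mono) auto
  also have "\<dots> \<le> (\<Sum>n. A n * x^n)"
    using assms by (intro sum_le_suminf) auto
  finally show ?thesis .
qed

context
  fixes c :: "nat \<Rightarrow> real"
  assumes c_nonneg: "\<And>n. c n \<ge> 0"
begin

lemma fps_Ptr_agree: "k \<le> N \<Longrightarrow> fps_of_poly (Ptr (fps_nth (lagrange_sol c)) N) $ k = lagrange_sol c $ k"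
  by (simp add: coeff_Ptr)

lemma coefP_le_Q:
  "coeff (Ptr (fps_nth (lagrange_sol c)) (Suc N)) n \<le> coeff (Qp c (fps_nth (lagrange_sol c)) N N) n"
proof (cases n)
  case 0 then show ?thesis by (simp add: coeff_Ptr coeff_Qp_0 lagrange_sol_0)
next
  case (Suc m)
  let ?G = "lagrange_sol c"
  let ?P = "fps_of_poly (Ptr (fps_nth ?G) N)"
  have nnP: "0 \<le> (?P ^ k) $ m" for k
    by (rule pow_nonneg) (simp add: coeff_Ptr lagrange_sol_nonneg c_nonneg)
  show ?thesis
  proof (cases "m \<le> N")
    case True
    have "coeff (Ptr (fps_nth ?G) (Suc N)) n = (\<Sum>i=0..m. c i * (?G ^ i) $ m)"
      using Suc True by (simp add: coeff_Ptr lagrange_sol_Suc)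
    also have "\<dots> = (\<Sum>i=0..m. c i * (?P ^ i) $ m)"
      using True fps_Ptr_agree[of _ N]
      by (intro sum.cong refl arg_cong2[where f="(*)"] pow_agree[of m]) auto
    also have "\<dots> \<le> (\<Sum>i\<le>N. c i * (?P ^ i) $ m)"
      using True nnP c_nonneg by (intro sum_mono2) auto
    also have "\<dots> = coeff (Qp c (fps_nth (lagrange_sol c)) N N) n"
      using Suc by (simp add: coeff_Qp_Suc)
    finally show ?thesis .
  next
    case False
    then have "coeff (Ptr (fps_nth ?G) (Suc N)) n = 0" using Suc by (simp add: coeff_Ptr)
    moreover have "0 \<le> coeff (Qp c (fps_nth (lagrange_sol c)) N N) n"
      using Suc nnP c_nonneg by (simp add: coeff_Qp_Suc sum_nonneg)
    ultimately show ?thesis by simp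
  qed
qed

lemma coefQ_le_A:
  "coeff (Qp c (fps_nth (lagrange_sol c)) N M) n \<le> lagrange_sol c $ n"
proof (cases n)
  case 0 then show ?thesis by (simp add: coeff_Qp_0 lagrange_sol_0)
next
  case (Suc m)
  let ?G = "lagrange_sol c"
  let ?P = "fps_of_poly (Ptr (fps_nth ?G) N)"
  have nnG: "0 \<le> ?G $ k" for k by (simp add: lagrange_sol_nonneg c_nonneg)
  have nnP: "0 \<le> ?P $ k" for k by (simp add: coeff_Ptr nnG)
  have PG: "?P $ k \<le> ?G $ k" for k by (simp add: coeff_Ptr nnG)
  have "coeff (Qp c (fps_nth ?G) N M) n = (\<Sum>k\<le>M. c k * (?P ^ k) $ m)"
    using Suc by (simp add: coeff_Qp_Suc)
  also have "\<dots> \<le> (\<Sum>k\<le>M. c k * (?G ^ k) $ m)"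
    using c_nonneg pow_mono[of ?P ?G, OF nnP PG] by (intro sum_mono mult_left_mono) auto
  also have "\<dots> \<le> (\<Sum>k\<le>max M m. c k * (?G ^ k) $ m)"
    using c_nonneg pow_nonneg[of ?G, OF nnG] by (intro sum_mono2) auto
  also have "\<dots> = (\<Sum>k=0..m. c k * (?G ^ k) $ m)"
    using pow_zero_low[of ?G, OF lagrange_sol_0]
    by (intro sum.mono_neutral_right) auto
  also have "\<dots> = ?G $ n" using Suc by (simp add: lagrange_sol_Suc)
  finally show ?thesis .
qed

lemma Ptr_nonneg: "0 \<le> x \<Longrightarrow> 0 \<le> poly (Ptr (fps_nth (lagrange_sol c)) N) x"
  by (simp add: poly_Ptr sum_nonneg lagrange_sol_nonneg c_nonneg)

lemma partial_le:
  assumes "0 \<le> y" "summable (\<lambda>k. c k * y^k)"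
  shows "(\<Sum>k\<le>M. c k * y ^ k) \<le> (\<Sum>k. c k * y^k)"
  using assms c_nonneg by (intro sum_le_suminf) auto

lemma psi_mono:
  assumes "0 \<le> y" "y \<le> t" "summable (\<lambda>k. c k * t^k)"
  shows "summable (\<lambda>k. c k * y^k)" "(\<Sum>k. c k * y^k) \<le> (\<Sum>k. c k * t^k)"
proof -
  have le: "c k * y^k \<le> c k * t^k" for k
    using assms c_nonneg by (intro mult_left_mono power_mono) auto
  show s: "summable (\<lambda>k. c k * y^k)"
    by (rule summable_comparison_test'[OF assms(3), of 0]) (use le assms c_nonneg in auto)
  show "(\<Sum>k. c k * y^k) \<le> (\<Sum>k. c k * t^k)"
    by (rule suminf_le[OF le s assms(3)])
qed

lemma lag_upper:
  assumes "0 \<le> s" "0 \<le> t" "summable (\<lambda>k. c k * t^k)" "s * (\<Sum>k. c k * t^k) \<le> t"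
  shows "summable (\<lambda>n. lagrange_sol c $ n * s^n)" "(\<Sum>n. lagrange_sol c $ n * s^n) \<le> t"
proof -
  let ?A = "fps_nth (lagrange_sol c)"
  have bound: "poly (Ptr ?A N) s \<le> t" for N
  proof (induction N)
    case 0 then show ?case using assms by (simp add: poly_Ptr lagrange_sol_0)
  next
    case (Suc N)
    let ?y = "poly (Ptr ?A N) s"
    have y0: "0 \<le> ?y" using Ptr_nonneg assms by simp
    have "poly (Ptr ?A (Suc N)) s \<le> poly (Qp c ?A N N) s"
      using coefP_le_Q assms by (intro poly_le_poly) auto
    also have "\<dots> = s * (\<Sum>k\<le>N. c k * ?y ^ k)" by (simp add: poly_Qp)
    also have "\<dots> \<le> s * (\<Sum>k. c k * ?y ^ k)"
      using partial_le[OF y0] psi_mono[OF y0 Suc assms(3)] assms by (intro mult_left_mono) auto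
    also have "\<dots> \<le> s * (\<Sum>k. c k * t ^ k)"
      using psi_mono[OF y0 Suc assms(3)] assms by (intro mult_left_mono) auto
    also have "\<dots> \<le> t" by fact
    finally show ?case .
  qed
  show sm: "summable (\<lambda>n. ?A n * s^n)"
    by (rule bounded_imp_summable[where B=t])
       (use bound assms in \<open>auto simp: poly_Ptr lagrange_sol_nonneg c_nonneg\<close>)
  show "(\<Sum>n. ?A n * s^n) \<le> t"
    by (rule LIMSEQ_le_const2[OF summable_LIMSEQ'[OF sm]]) (use bound in \<open>auto simp: poly_Ptr\<close>)
qed

lemma lag_fix:
  assumes s0: "0 \<le> s" and sm: "summable (\<lambda>n. lagrange_sol c $ n * s^n)"
    and smc: "summable (\<lambda>k. c k * (\<Sum>n. lagrange_sol c $ n * s^n)^k)"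
  shows "(\<Sum>n. lagrange_sol c $ n * s^n) = s * (\<Sum>k. c k * (\<Sum>n. lagrange_sol c $ n * s^n)^k)"
proof -
  let ?A = "fps_nth (lagrange_sol c)"
  define g where "g = (\<Sum>n. ?A n * s^n)"
  have Pg: "poly (Ptr ?A N) s \<le> g" for N
    unfolding poly_Ptr g_def using sm s0 by (intro sum_le_suminf) (auto simp: lagrange_sol_nonneg c_nonneg)
  have P0: "0 \<le> poly (Ptr ?A N) s" for N using Ptr_nonneg s0 by simp
  have g0: "0 \<le> g" using P0[of 0] Pg[of 0] by linarith
  have smc': "summable (\<lambda>k. c k * g^k)" using smc by (simp add: g_def)
  have upper: "poly (Ptr ?A N) s \<le> s * (\<Sum>k. c k * g^k)" for N
  proof (cases N)
    case 0 then show ?thesis using s0 g0 c_nonneg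
      by (simp add: poly_Ptr lagrange_sol_0 suminf_nonneg[OF smc'])
  next
    case (Suc N')
    let ?y = "poly (Ptr ?A N') s"
    have "poly (Ptr ?A N) s \<le> poly (Qp c ?A N' N') s"
      using coefP_le_Q s0 Suc by (intro poly_le_poly) auto
    also have "\<dots> = s * (\<Sum>k\<le>N'. c k * ?y ^ k)" by (simp add: poly_Qp)
    also have "\<dots> \<le> s * (\<Sum>k. c k * ?y ^ k)"
      using partial_le[OF P0] psi_mono[OF P0 Pg smc'] s0 by (intro mult_left_mono) auto
    also have "\<dots> \<le> s * (\<Sum>k. c k * g ^ k)"
      using psi_mono[OF P0 Pg smc'] s0 by (intro mult_left_mono) auto
    finally show ?thesis .
  qed
  have limg: "(\<lambda>n. \<Sum>i\<le>n. ?A i * s^i) \<longlonglongrightarrow> g"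
    unfolding g_def by (rule summable_LIMSEQ'[OF sm])
  have le1: "g \<le> s * (\<Sum>k. c k * g^k)"
    by (rule LIMSEQ_le_const2[OF limg]) (use upper in \<open>auto simp: poly_Ptr\<close>)
  have lower: "s * (\<Sum>k\<le>M. c k * g ^ k) \<le> g" for M
  proof -
    have lim: "(\<lambda>N. s * (\<Sum>k\<le>M. c k * poly (Ptr ?A N) s ^ k)) \<longlonglongrightarrow> s * (\<Sum>k\<le>M. c k * g ^ k)"
      using summable_LIMSEQ'[OF sm] unfolding g_def poly_Ptr by (intro tendsto_intros)
    show ?thesis
    proof (rule LIMSEQ_le_const2[OF lim], intro exI allI impI)
      fix N
      have "s * (\<Sum>k\<le>M. c k * poly (Ptr ?A N) s ^ k) = poly (Qp c ?A N M) s" by (simp add: poly_Qp)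
      also have "\<dots> \<le> g" unfolding g_def
        using coefQ_le_A s0 sm by (intro poly_le_suminf) (auto simp: lagrange_sol_nonneg c_nonneg)
      finally show "s * (\<Sum>k\<le>M. c k * poly (Ptr ?A N) s ^ k) \<le> g" .
    qed
  qed
  have le2: "s * (\<Sum>k. c k * g^k) \<le> g"
  proof -
    have "(\<lambda>M. s * (\<Sum>k\<le>M. c k * g ^ k)) \<longlonglongrightarrow> s * (\<Sum>k. c k * g^k)"
      by (intro tendsto_intros summable_LIMSEQ'[OF smc'])
    then show ?thesis by (rule LIMSEQ_le_const2) (use lower in auto)
  qed
  from le1 le2 show ?thesis by (simp add: g_def)
qed

end


lemma ps_eval_real: "ps_eval a (x::real) = (\<Sum>n. a n * x^n)"
  by (simp add: ps_eval_def)

context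
  fixes a :: "nat \<Rightarrow> real"
  assumes aK: "in_K a"
begin

definition "Iconv = {w::real. 0 < w \<and> ereal w < conv_radius a}"
definition "psi y = (\<Sum>n. a n * y^n)"
definition "S1 y = (\<Sum>n. real n * a n * y^n)"
definition "Dpsi y = (\<Sum>n. diffs a n * y^n)"

lemma Iconv_iff: "w \<in> Iconv \<longleftrightarrow> 0 < w \<and> ereal w < conv_radius a"
  by (simp add: Iconv_def)

lemma a_nonneg: "a n \<ge> 0" using aK by (simp add: in_K_def)
lemma a0_pos: "a 0 > 0" using aK by (simp add: in_K_def)
lemma R_pos: "conv_radius a > 0" using aK by (simp add: in_K_def)

lemma summable_a: "0 \<le> y \<Longrightarrow> ereal y < conv_radius a \<Longrightarrow> summable (\<lambda>n. a n * y^n)"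
  using summable_in_conv_radius[of y a] by simp

lemma psi_pos: "0 \<le> y \<Longrightarrow> ereal y < conv_radius a \<Longrightarrow> psi y > 0"
proof -
  assume y: "0 \<le> y" "ereal y < conv_radius a"
  have "0 < (\<Sum>n. a n * y^n)"
    by (rule suminf_pos2[where i=0]) (use summable_a[OF y] a_nonneg a0_pos y in auto)
  then show ?thesis by (simp add: psi_def)
qed

lemma deriv_facts:
  assumes w: "0 < w" "ereal w < conv_radius a"
  shows "DERIV psi w :> Dpsi w" "(\<lambda>n. real n * a n * w^n) sums (w * Dpsi w)"
proof -
  obtain K where K: "w < K" "ereal K < conv_radius a" using ereal_dense2[OF w(2)] by auto
  have smK: "summable (\<lambda>n. a n * x^n)" if "norm x < K" for x :: real
  proof -
    have "ereal (norm x) < ereal K" using that by simp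
    then have "ereal (norm x) < conv_radius a" using K(2) by (rule less_trans)
    then show ?thesis by (rule summable_in_conv_radius)
  qed
  show "DERIV psi w :> Dpsi w"
    unfolding psi_def[abs_def] Dpsi_def
    by (rule termdiffs_strong[of _ K]) (use summable_a[of K] K w in auto)
  have "(\<lambda>n. of_nat n * a n * w^(n - Suc 0)) sums Dpsi w"
    unfolding Dpsi_def
    by (intro diffs_equiv termdiff_converges[of w K]) (use smK w K in auto)
  note sm = sums_mult[OF this, of w]
  have eq: "(\<lambda>n. w * (of_nat n * a n * w^(n - Suc 0))) = (\<lambda>n. real n * a n * w^n)"
  proof (rule ext)
    fix n show "w * (of_nat n * a n * w^(n - Suc 0)) = real n * a n * w^n"
      by (cases n) auto
  qed
  show "(\<lambda>n. real n * a n * w^n) sums (w * Dpsi w)" using sm unfolding eq .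
qed

lemma kh_mean_eq:
  assumes w: "0 < w" "ereal w < conv_radius a"
  shows "kh_mean a w = S1 w / psi w"
proof -
  have f: "(\<lambda>x::real. ps_eval a x) = psi" by (simp add: fun_eq_iff ps_eval_real psi_def)
  have "deriv psi w = Dpsi w" by (rule DERIV_imp_deriv[OF deriv_facts(1)[OF w]])
  moreover have "S1 w = w * Dpsi w" using deriv_facts(2)[OF w] by (simp add: S1_def sums_iff)
  ultimately show ?thesis by (simp add: kh_mean_def f psi_def[symmetric] ps_eval_real)
qed

lemma S1_pos:
  assumes w: "0 < w" "ereal w < conv_radius a"
  shows "S1 w > 0"
proof -
  obtain N where N: "N > 0" "a N \<noteq> 0" using aK by (auto simp: in_K_def)
  have "0 < (\<Sum>n. real n * a n * w^n)"
  proof (rule suminf_pos2[where i=N])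
    show "summable (\<lambda>n. real n * a n * w^n)" using deriv_facts(2)[OF w] by (simp add: sums_iff)
    show "0 \<le> real n * a n * w^n" for n using a_nonneg[of n] w by simp
    have "a N > 0" using a_nonneg[of N] N by simp
    then show "0 < real N * a N * w^N" using N w by simp
  qed
  then show ?thesis by (simp add: S1_def)
qed

lemma mean_strict_mono:
  assumes u: "0 < u" and uv: "u < v" and v: "ereal v < conv_radius a"
  shows "S1 u / psi u < S1 v / psi v"
proof -
  have u2: "ereal u < conv_radius a" proof -
    have "ereal u < ereal v" using uv by simp
    then show ?thesis using v by (rule less_trans)
  qed
  have v0: "0 < v" using u uv by simp
  define l where "l = S1 u / psi u"
  have pu: "psi u > 0" "psi v > 0" using psi_pos u u2 v v0 by auto
  have l0: "l > 0" using S1_pos[OF u u2] pu by (simp add: l_def)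
  have sS: "(\<lambda>n. real n * a n * w^n) sums S1 w" if "0 < w" "ereal w < conv_radius a" for w
    using deriv_facts(2)[OF that] by (simp add: S1_def sums_iff)
  have sP: "(\<lambda>n. a n * w^n) sums psi w" if "0 < w" "ereal w < conv_radius a" for w
    using summable_a[of w] that by (simp add: psi_def sums_iff)
  define T where "T w n = w powr (-l) * (real n * a n * w^n - l * (a n * w^n))" for w n
  have sT: "T w sums (w powr (-l) * (S1 w - l * psi w))" if "0 < w" "ereal w < conv_radius a" for w
    unfolding T_def[abs_def] by (intro sums_mult sums_diff sS sP that)
  have pu0: "psi u \<noteq> 0" using pu by simp
  have Tu: "T u sums 0" using sT[OF u u2] by (simp add: l_def pu0)
  have Tpow: "T w n = (real n - l) * a n * w powr (real n - l)" if "0 < w" for w n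
  proof -
    have "w powr (real n + (- l)) = w powr real n * w powr (-l)" by (rule powr_add)
    then have "w powr (real n - l) = w^n * w powr (-l)"
      using powr_realpow[OF that, of n] by simp
    then show ?thesis by (simp add: T_def algebra_simps)
  qed
  have le: "T u n \<le> T v n" for n
  proof (cases "real n - l \<ge> 0")
    case True
    then have pm: "u powr (real n - l) \<le> v powr (real n - l)" using u uv by (intro powr_mono2) auto
    have nn: "0 \<le> (real n - l) * a n" using True a_nonneg[of n] by simp
    show ?thesis unfolding Tpow[OF u] Tpow[OF v0] by (rule mult_left_mono[OF pm nn])
  next
    case False
    then have pm: "v powr (real n - l) \<le> u powr (real n - l)" using u uv by (intro powr_mono2') auto
    have np: "(real n - l) * a n \<le> 0" using False a_nonneg[of n] by (simp add: mult_nonpos_nonneg)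
    show ?thesis unfolding Tpow[OF u] Tpow[OF v0] by (rule mult_left_mono_neg[OF pm np])
  qed
  have lt: "T u 0 < T v 0"
  proof -
    have "v powr (- l) < u powr (- l)" using u uv l0 by (intro powr_less_mono2_neg) auto
    then have "(- l) * u powr (- l) < (- l) * v powr (- l)" using l0 by simp
    then have "a 0 * ((- l) * u powr (- l)) < a 0 * ((- l) * v powr (- l))" using a0_pos by simp
    then show ?thesis unfolding Tpow[OF u] Tpow[OF v0] by (simp add: algebra_simps)
  qed
  have "0 < (\<Sum>n. T v n - T u n)"
  proof (rule suminf_pos2[where i=0])
    show "summable (\<lambda>n. T v n - T u n)"
      using sT[OF v0 v] Tu by (intro summable_diff) (auto simp: sums_iff)
    show "0 \<le> T v n - T u n" for n using le[of n] by simp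
    show "0 < T v 0 - T u 0" using lt by simp
  qed
  also have "\<dots> = v powr (-l) * (S1 v - l * psi v)"
    using sT[OF v0 v] Tu by (simp add: sums_iff suminf_diff[symmetric])
  finally have "S1 v - l * psi v > 0" using v0 by (simp add: zero_less_mult_iff)
  then show ?thesis using pu unfolding l_def[symmetric] by (simp add: less_divide_eq)
qed

lemma Iconv_lt: "w \<in> Iconv \<Longrightarrow> 0 < v \<Longrightarrow> v \<le> w \<Longrightarrow> v \<in> Iconv"
proof -
  assume "w \<in> Iconv" "0 < v" "v \<le> w"
  then have "ereal v \<le> ereal w" "ereal w < conv_radius a" by (auto simp: Iconv_def)
  then have "ereal v < conv_radius a" by (rule le_less_trans)
  with \<open>0 < v\<close> show ?thesis by (simp add: Iconv_def)
qed

lemma h_less: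
  assumes u: "0 < u" and uv: "u < v" and v: "ereal v < conv_radius a"
    and m1: "\<And>x. u < x \<Longrightarrow> x < v \<Longrightarrow> S1 x / psi x < 1"
  shows "u / psi u < v / psi v"
proof -
  have vI: "v \<in> Iconv" using u uv v by (simp add: Iconv_def)
  have der: "DERIV (\<lambda>x. x / psi x) x :> (1 * psi x - Dpsi x * x) / (psi x ^ Suc (Suc 0))"
    if "0 < x" "x \<le> v" for x
  proof -
    have xI: "x \<in> Iconv" using Iconv_lt[OF vI that] .
    then have "psi x \<noteq> 0" using psi_pos[of x] by (auto simp: Iconv_def)
    moreover have "DERIV psi x :> Dpsi x" using xI by (intro deriv_facts(1)) (auto simp: Iconv_def)
    ultimately show ?thesis by (intro DERIV_quotient DERIV_ident)
  qed
  show ?thesis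
  proof (rule DERIV_pos_imp_increasing_open[OF uv])
    fix x assume x: "u < x" "x < v"
    have xI: "x \<in> Iconv" using Iconv_lt[OF vI] x u by simp
    have pp: "psi x > 0" using psi_pos[of x] xI by (auto simp: Iconv_def)
    have "S1 x = x * Dpsi x" using deriv_facts(2)[of x] xI by (simp add: Iconv_def S1_def sums_iff)
    moreover have "S1 x < psi x" using m1[OF x] pp by (simp add: divide_less_eq)
    ultimately have "0 < (1 * psi x - Dpsi x * x) / (psi x ^ Suc (Suc 0))" using pp by (simp add: mult.commute)
    then show "\<exists>y. DERIV (\<lambda>x. x / psi x) x :> y \<and> 0 < y" using der[of x] x u by auto
  next
    show "continuous_on {u..v} (\<lambda>x. x / psi x)"
    proof (rule continuous_at_imp_continuous_on, rule ballI)
      fix x assume "x \<in> {u..v}"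
      then have "0 < x" "x \<le> v" using u by auto
      from DERIV_isCont[OF der[OF this]] show "isCont (\<lambda>x. x / psi x) x" .
    qed
  qed
qed

lemma ev_RF:
  assumes "w1 \<in> Iconv"
  shows "eventually (\<lambda>w. w \<in> Iconv \<and> w1 < w) (R_filter a)"
proof (cases "conv_radius a = \<infinity>")
  case True
  have "eventually (\<lambda>w. w \<in> Iconv \<and> w1 < w) at_top"
    using eventually_gt_at_top[of w1] by (rule eventually_mono) (use assms True in \<open>auto simp: Iconv_def\<close>)
  then show ?thesis using True by (simp add: R_filter_def)
next
  case False
  obtain r where r: "conv_radius a = ereal r" using False R_pos by (cases "conv_radius a") auto
  have "w1 < r" using assms r by (simp add: Iconv_def)
  then have "eventually (\<lambda>x. x \<in> {w1<..<r}) (at_left r)" by (rule eventually_at_left_real)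
  then have "eventually (\<lambda>w. w \<in> Iconv \<and> w1 < w) (at_left r)"
    by (rule eventually_mono) (use assms r in \<open>auto simp: Iconv_def\<close>)
  then show ?thesis using r by (simp add: R_filter_def)
qed

lemma RF_nontriv: "\<not> trivial_limit (R_filter a)"
proof (cases "conv_radius a = \<infinity>")
  case True then show ?thesis by (simp add: R_filter_def)
next
  case False
  obtain r where r: "conv_radius a = ereal r" using False R_pos by (cases "conv_radius a") auto
  then show ?thesis using False by (simp add: R_filter_def)
qed

lemma Kstar_if:
  assumes w1: "w1 \<in> Iconv" and m1: "S1 w1 / psi w1 > 1"
  shows "K_star a"
proof -
  define f where "f w = ereal (kh_mean a w)" for w
  define L where "L = (SUP w\<in>Iconv. f w)"
  have fI: "f w = ereal (S1 w / psi w)" if "w \<in> Iconv" for w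
    using kh_mean_eq[of w] that by (simp add: f_def Iconv_def)
  have fmono: "f u \<le> f v" if "u \<in> Iconv" "v \<in> Iconv" "u \<le> v" for u v
  proof (cases "u = v")
    case False
    then have "S1 u / psi u < S1 v / psi v"
      using that by (intro mean_strict_mono) (auto simp: Iconv_def)
    then show ?thesis using that by (simp add: fI)
  qed simp
  have lim: "(f \<longlongrightarrow> L) (R_filter a)"
  proof (rule increasing_tendsto)
    show "eventually (\<lambda>n. f n \<le> L) (R_filter a)"
      using ev_RF[OF w1] by (rule eventually_mono) (auto simp: L_def intro: SUP_upper)
    fix x assume "x < L"
    then obtain w0 where w0: "w0 \<in> Iconv" "x < f w0" by (auto simp: L_def less_SUP_iff)
    show "eventually (\<lambda>n. x < f n) (R_filter a)"
      using ev_RF[OF w0(1)] by (rule eventually_mono) (use w0 fmono in \<open>force\<close>)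
  qed
  have "Lim (R_filter a) f = L" by (rule tendsto_Lim[OF RF_nontriv lim])
  moreover have "f w1 \<le> L" using w1 by (auto simp: L_def intro: SUP_upper)
  moreover have "1 < f w1" using fI[OF w1] m1 by simp
  ultimately have "1 < Lim (R_filter a) f" by simp
  then show ?thesis using aK by (simp add: K_star_def f_def[abs_def])
qed

lemma notKstar_mean:
  assumes "\<not> K_star a" "w \<in> Iconv"
  shows "S1 w / psi w < 1"
proof (rule ccontr)
  assume "\<not> S1 w / psi w < 1"
  obtain w1 where w1: "w < w1" "ereal w1 < conv_radius a"
    using ereal_dense2[of w "conv_radius a"] assms(2) by (auto simp: Iconv_def)
  have w1I: "w1 \<in> Iconv" using w1 assms(2) by (simp add: Iconv_def)
  have "S1 w / psi w < S1 w1 / psi w1"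
    using assms(2) w1 by (intro mean_strict_mono) (auto simp: Iconv_def)
  then have "K_star a" using Kstar_if[OF w1I] \<open>\<not> S1 w / psi w < 1\<close> by simp
  with assms(1) show False by simp
qed


lemma psi_ps: "ps_eval a y = psi y" by (simp add: ps_eval_real psi_def)

lemma main_t:
  assumes tI: "t \<in> Iconv"
  defines "s \<equiv> t / ps_eval a t"
  shows "summable (\<lambda>n. lagrange_sol a $ n * s^n)"
    and "(\<Sum>n. lagrange_sol a $ n * s^n) \<le> t"
    and "0 < (\<Sum>n. lagrange_sol a $ n * s^n)"
    and "(\<Sum>n. lagrange_sol a $ n * s^n) = s * psi (\<Sum>n. lagrange_sol a $ n * s^n)"
    and "0 < s"
proof -
  have t0: "0 < t" and tR: "ereal t < conv_radius a" using tI by (auto simp: Iconv_def)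
  have pt: "psi t > 0" using psi_pos[of t] t0 tR by simp
  have s0: "0 < s" using t0 pt by (simp add: s_def psi_ps)
  then show "0 < s" .
  have sp: "s * (\<Sum>k. a k * t^k) \<le> t" using pt by (simp add: s_def psi_ps psi_def)
  show sm: "summable (\<lambda>n. lagrange_sol a $ n * s^n)"
    and gle: "(\<Sum>n. lagrange_sol a $ n * s^n) \<le> t"
    using lag_upper[OF a_nonneg, of s t] s0 t0 summable_a[of t] tR sp by auto
  show gpos: "0 < (\<Sum>n. lagrange_sol a $ n * s^n)"
  proof (rule suminf_pos2[where i=1])
    show "summable (\<lambda>n. lagrange_sol a $ n * s^n)" by fact
    show "0 \<le> lagrange_sol a $ n * s ^ n" for n using lagrange_sol_nonneg[OF a_nonneg] s0 by simp
    have "lagrange_sol a $ 1 = a 0" using lagrange_sol_Suc[of a 0] by simp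
    then show "0 < lagrange_sol a $ 1 * s ^ 1" using a0_pos s0 by simp
  qed
  define g where "g = (\<Sum>n. lagrange_sol a $ n * s^n)"
  have gR: "ereal g < conv_radius a"
  proof -
    have "ereal g \<le> ereal t" using gle by (simp add: g_def)
    then show ?thesis using tR by (rule le_less_trans)
  qed
  show "(\<Sum>n. lagrange_sol a $ n * s^n) = s * psi (\<Sum>n. lagrange_sol a $ n * s^n)"
    using lag_fix[of a, OF a_nonneg, of s] s0 sm summable_a[of g] gR gpos
    unfolding g_def[symmetric] by (simp add: psi_def)
qed

lemma g_eq_t:
  assumes tI: "t \<in> Iconv" and m1: "\<And>x. 0 < x \<Longrightarrow> x < t \<Longrightarrow> S1 x / psi x < 1"
  shows "(\<Sum>n. lagrange_sol a $ n * (t / ps_eval a t)^n) = t"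
proof (rule ccontr)
  define s where "s = t / ps_eval a t"
  define g where "g = (\<Sum>n. lagrange_sol a $ n * s^n)"
  assume "(\<Sum>n. lagrange_sol a $ n * (t / ps_eval a t)^n) \<noteq> t"
  then have "g \<noteq> t" by (simp add: g_def s_def)
  then have gt: "g < t" using main_t(2)[OF tI] by (simp add: g_def s_def)
  have g0: "0 < g" using main_t(3)[OF tI] by (simp add: g_def s_def)
  have tR: "ereal t < conv_radius a" using tI by (simp add: Iconv_def)
  have gR: "ereal g < conv_radius a" using Iconv_lt[OF tI g0] gt by (simp add: Iconv_def)
  have lt: "g / psi g < t / psi t"
    by (rule h_less[OF g0 gt tR]) (use m1 g0 in auto)
  have ge: "g = s * psi g" using main_t(4)[OF tI] by (simp add: g_def s_def)
  have "psi g > 0" using psi_pos[of g] g0 gR by simp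
  then have "s = g / psi g" using ge by (simp add: eq_divide_eq)
  with lt have "s < t / psi t" by simp
  then show False by (simp add: s_def psi_ps)
qed

end


lemma scale_sol:
  fixes a :: "nat \<Rightarrow> real"
  assumes t: "t \<noteq> 0"
  shows "lagrange_sol (psi_t a t) = Abs_fps (\<lambda>n. lagrange_sol a $ n * (t / ps_eval a t)^n / t)"
proof (rule lagrange_sol_unique, unfold is_lsol_iff, intro conjI allI)
  define P where "P = ps_eval a t"
  define s where "s = t / P"
  define G where "G = lagrange_sol a"
  define H where "H = Abs_fps (\<lambda>n. G $ n * s^n / t)"
  note defs = P_def[symmetric] s_def[symmetric] G_def[symmetric] H_def[symmetric]
  show "Abs_fps (\<lambda>n. lagrange_sol a $ n * (t / ps_eval a t) ^ n / t) $ 0 = 0"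
    by (simp add: lagrange_sol_0)
  fix n
  have Hk: "H $ k = (1/t) * s^k * G $ k" for k by (simp add: H_def)
  have "(\<Sum>i = 0..n. Abs_fps (psi_t a t) $ i * (H ^ i) $ n)
      = (\<Sum>i = 0..n. (a i * t^i / P) * ((1/t)^i * s^n * (G^i) $ n))"
    by (simp add: psi_t_def P_def pow_scale[OF Hk])
  also have "\<dots> = (\<Sum>i = 0..n. (s^n / P) * (a i * (G^i) $ n))"
  proof (intro sum.cong refl)
    fix i
    have e: "t^i * (1/t)^i = 1" using t by (simp add: power_mult_distrib[symmetric])
    have "(a i * t^i / P) * ((1/t)^i * s^n * (G^i) $ n) = (t^i * (1/t)^i) * ((s^n / P) * (a i * (G^i) $ n))"
      by (simp add: divide_inverse mult_ac)
    then show "(a i * t^i / P) * ((1/t)^i * s^n * (G^i) $ n) = (s^n / P) * (a i * (G^i) $ n)"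
      by (simp only: e mult_1)
  qed
  also have "\<dots> = (s^n / P) * G $ Suc n"
    by (simp add: G_def lagrange_sol_Suc sum_distrib_left)
  also have "\<dots> = H $ Suc n"
  proof -
    have st: "s / t = 1 / P" using t by (simp add: s_def)
    have "H $ Suc n = G $ Suc n * s^n * (s / t)" by (simp add: H_def mult_ac)
    also have "\<dots> = (s^n / P) * G $ Suc n" by (simp add: st)
    finally show ?thesis by simp
  qed
  finally show "Abs_fps (\<lambda>n. lagrange_sol a $ n * (t / ps_eval a t) ^ n / t) $ Suc n =
      (\<Sum>i = 0..n. Abs_fps (psi_t a t) $ i * (Abs_fps (\<lambda>n. lagrange_sol a $ n * (t / ps_eval a t) ^ n / t) ^ i) $ n)"
    by (simp add: H_def G_def s_def P_def)
qed


lemma csummable: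
  fixes b :: "nat \<Rightarrow> real" and z :: complex
  assumes "summable b" "\<And>n. b n \<ge> 0" "norm z \<le> 1"
  shows "summable (\<lambda>n. of_real (b n) * z^n)"
proof (rule summable_norm_cancel, rule summable_comparison_test'[OF assms(1), of 0])
  fix n
  have "norm z ^ n \<le> 1" using assms(3) by (simp add: power_le_one)
  then show "norm (norm (of_real (b n) * z^n)) \<le> b n"
    using assms(2)[of n] by (simp add: norm_mult norm_power mult_left_le)
qed

lemma cplx_facts:
  fixes b :: "nat \<Rightarrow> real"
  assumes sb: "summable b" and b0: "\<And>n. b n \<ge> 0" and b1: "suminf b \<le> 1" and bpos: "b 1 > 0"
  shows "\<forall>z::complex. norm z \<le> 1 \<longrightarrow> (\<lambda>n. of_real (b n) * z^n) sums ps_eval b z"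
    and "(\<lambda>z::complex. ps_eval b z) holomorphic_on ball 0 1"
    and "continuous_on (cball 0 1) (\<lambda>z::complex. ps_eval b z)"
    and "(\<lambda>z::complex. ps_eval b z) ` ball 0 1 \<subseteq> ball 0 1"
proof -
  show "\<forall>z::complex. norm z \<le> 1 \<longrightarrow> (\<lambda>n. of_real (b n) * z^n) sums ps_eval b z"
    using csummable[OF sb b0] by (auto simp: ps_eval_def summable_sums)
  have ps: "(\<lambda>z::complex. ps_eval b z) = (\<lambda>z. \<Sum>n. of_real (b n) * z^n)"
    by (simp add: ps_eval_def[abs_def])
  show "(\<lambda>z::complex. ps_eval b z) holomorphic_on ball 0 1"
    unfolding ps
  proof (subst holomorphic_on_open, simp, intro ballI exI)
    fix z :: complex assume "z \<in> ball 0 1"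
    then have "norm z < 1" by simp
    show "((\<lambda>z. \<Sum>n. of_real (b n) * z^n) has_field_derivative (\<Sum>n. diffs (\<lambda>n. of_real (b n)) n * z^n)) (at z)"
      by (rule termdiffs_strong'[of 1]) (use csummable[OF sb b0] \<open>norm z < 1\<close> in auto)
  qed
  show "continuous_on (cball 0 1) (\<lambda>z::complex. ps_eval b z)"
    unfolding ps
  proof (rule uniform_limit_theorem[OF _ Weierstrass_m_test[OF _ sb]])
    show "\<forall>\<^sub>F n in sequentially. continuous_on (cball 0 1) (\<lambda>z::complex. \<Sum>i<n. of_real (b i) * z ^ i)"
      by (intro always_eventually allI continuous_intros)
    show "norm (of_real (b n) * (z::complex)^n) \<le> b n" if "z \<in> cball 0 1" for n z
    proof -
      have "norm z ^ n \<le> 1" using that by (simp add: power_le_one)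
      then show ?thesis using b0[of n] by (simp add: norm_mult norm_power mult_left_le)
    qed
  qed simp
  show "(\<lambda>z::complex. ps_eval b z) ` ball 0 1 \<subseteq> ball 0 1"
  proof (rule image_subsetI)
    fix z :: complex assume "z \<in> ball 0 1"
    then have z1: "norm z < 1" by simp
    have sn: "summable (\<lambda>n. b n * norm z ^ n)"
      by (rule summable_comparison_test'[OF sb, of 0])
         (use b0 z1 in \<open>auto simp: power_le_one mult_left_le\<close>)
    have eqn: "(\<lambda>n. norm (of_real (b n) * z^n)) = (\<lambda>n. b n * norm z ^ n)"
      using b0 by (simp add: norm_mult norm_power)
    have "norm (ps_eval b z) \<le> (\<Sum>n. norm (of_real (b n) * z^n))"
      unfolding ps_eval_def by (rule summable_norm) (simp only: eqn sn)
    also have "\<dots> = (\<Sum>n. b n * norm z ^ n)" using b0 by (simp add: norm_mult norm_power)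
    also have "\<dots> < suminf b"
    proof -
      have "0 < (\<Sum>n. b n - b n * norm z ^ n)"
      proof (rule suminf_pos2[where i=1])
        show "summable (\<lambda>n. b n - b n * norm z ^ n)" by (intro summable_diff sb sn)
        show "0 \<le> b n - b n * norm z ^ n" for n
          using b0[of n] z1 by (simp add: power_le_one mult_left_le)
        show "0 < b 1 - b 1 * norm z ^ 1" using bpos z1 by simp
      qed
      also have "\<dots> = suminf b - (\<Sum>n. b n * norm z ^ n)" by (rule suminf_diff[OF sb sn, symmetric])
      finally show ?thesis by simp
    qed
    also have "\<dots> \<le> 1" by fact
    finally show "ps_eval b z \<in> ball 0 1" by simp
  qed
qed


lemma B_fun:
  assumes "t \<noteq> 0"
  shows "fps_nth (lagrange_sol (psi_t a t)) = (\<lambda>n. lagrange_sol a $ n * (t / ps_eval a t)^n / t)"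
  using scale_sol[OF assms, of a] by (simp add: fun_eq_iff)

lemma part1:
  assumes aK: "in_K a" and t0: "0 < t" and tR: "ereal t < conv_radius a"
  shows "(\<forall>z::complex. norm z \<le> 1 \<longrightarrow>
               (\<lambda>n. of_real (fps_nth (lagrange_sol (psi_t a t)) n) * z ^ n) sums
                 (ps_eval (fps_nth (lagrange_sol a)) (of_real (t / ps_eval a t) * z) / of_real t))
          \<and> (\<lambda>z::complex. ps_eval (fps_nth (lagrange_sol (psi_t a t))) z) holomorphic_on ball 0 1
          \<and> continuous_on (cball 0 1) (\<lambda>z::complex. ps_eval (fps_nth (lagrange_sol (psi_t a t))) z)
          \<and> (\<lambda>z::complex. ps_eval (fps_nth (lagrange_sol (psi_t a t))) z) ` ball 0 1 \<subseteq> ball 0 1"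
proof -
  define s where "s = t / ps_eval a t"
  define A where "A = fps_nth (lagrange_sol a)"
  define b where "b n = A n * s^n / t" for n
  have tI: "t \<in> Iconv a" using t0 tR by (simp add: Iconv_iff[OF aK])
  note mt = main_t[OF aK tI, folded s_def, folded A_def]
  have Bb: "fps_nth (lagrange_sol (psi_t a t)) = b"
    using B_fun[of t a] t0 by (simp add: b_def[abs_def] s_def A_def)
  have A0: "A n \<ge> 0" for n using lagrange_sol_nonneg[OF a_nonneg[OF aK]] by (simp add: A_def)
  have sb: "summable b" unfolding b_def by (intro summable_divide mt(1))
  have b0: "b n \<ge> 0" for n using A0[of n] mt(5) t0 by (simp add: b_def)
  have b1: "suminf b \<le> 1"
    using mt(2) t0 by (simp add: b_def[abs_def] suminf_divide[OF mt(1)])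
  have "A 1 = a 0" using lagrange_sol_Suc[of a 0] by (simp add: A_def)
  then have bpos: "b 1 > 0" using a0_pos[OF aK] mt(5) t0 by (simp add: b_def)
  note cf = cplx_facts[OF sb b0 b1 bpos]
  have sums1: "(\<lambda>n. of_real (b n) * z ^ n) sums (ps_eval A (of_real s * z) / of_real t)"
    if "norm z \<le> 1" for z :: complex
  proof -
    have eq: "of_real (A n * s^n) * z^n = of_real (A n) * (of_real s * z)^n" for n
      by (simp add: power_mult_distrib)
    have "summable (\<lambda>n. of_real (A n * s^n) * z^n)"
      by (rule csummable[OF mt(1) _ that]) (use A0 mt(5) in simp)
    then have "summable (\<lambda>n. of_real (A n) * (of_real s * z)^n)" by (simp only: eq)
    then have "(\<lambda>n. of_real (A n) * (of_real s * z)^n) sums ps_eval A (of_real s * z)"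
      by (simp add: ps_eval_def summable_sums)
    from sums_divide[OF this, of "of_real t"]
    show ?thesis by (simp add: b_def power_mult_distrib mult.assoc)
  qed
  show ?thesis unfolding Bb using cf sums1 by (simp add: A_def s_def)
qed

lemma part_sum:
  assumes aK: "in_K a" and t0: "0 < t" and tR: "ereal t < conv_radius a"
    and m1: "\<And>x. 0 < x \<Longrightarrow> x < t \<Longrightarrow> S1 a x / psi a x < 1"
  shows "\<forall>z::complex. norm z \<le> 1 \<longrightarrow>
               (\<lambda>n. of_real (kh_prob_g (fps_nth (lagrange_sol a)) (t / ps_eval a t) n) * z ^ n) sums
                 ps_eval (fps_nth (lagrange_sol (psi_t a t))) z"
proof -
  define s where "s = t / ps_eval a t"
  define A where "A = fps_nth (lagrange_sol a)"
  define b where "b n = A n * s^n / t" for n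
  have tI: "t \<in> Iconv a" using t0 tR by (simp add: Iconv_iff[OF aK])
  note mt = main_t[OF aK tI, folded s_def, folded A_def]
  have gt: "(\<Sum>n. A n * s^n) = t" using g_eq_t[OF aK tI m1] by (simp add: A_def s_def)
  have Bb: "fps_nth (lagrange_sol (psi_t a t)) = b"
    using B_fun[of t a] t0 by (simp add: b_def[abs_def] s_def A_def)
  have kb: "kh_prob_g A s n = b n" for n
    using mt(5) gt by (simp add: kh_prob_g_def ps_eval_real b_def)
  have A0: "A n \<ge> 0" for n using lagrange_sol_nonneg[OF a_nonneg[OF aK]] by (simp add: A_def)
  have sb: "summable b" unfolding b_def by (intro summable_divide mt(1))
  have b0: "b n \<ge> 0" for n using A0[of n] mt(5) t0 by (simp add: b_def)
  have "\<forall>z::complex. norm z \<le> 1 \<longrightarrow> (\<lambda>n. of_real (b n) * z^n) sums ps_eval b z"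
    using csummable[OF sb b0] by (auto simp: ps_eval_def summable_sums)
  then show ?thesis by (simp add: Bb kb[folded A_def s_def] A_def[symmetric] s_def[symmetric])
qed

lemma part_zero:
  assumes aK: "in_K a"
  shows "\<forall>z::complex. norm z \<le> 1 \<longrightarrow>
               (\<lambda>n. of_real (kh_prob_g (fps_nth (lagrange_sol a)) (0 / ps_eval a 0) n) * z ^ n) sums
                 ps_eval (fps_nth (lagrange_sol (psi_t a 0))) z"
proof (intro allI impI)
  fix z :: complex
  have p0: "ps_eval a (0::real) = a 0" by (simp add: ps_eval_real powser_zero)
  have "lagrange_sol (psi_t a 0) = fps_X"
  proof (rule lagrange_sol_unique, unfold is_lsol_iff, intro conjI allI)
    fix n
    have "(\<Sum>i = 0..n. Abs_fps (psi_t a 0) $ i * (fps_X ^ i) $ n) = (\<Sum>i\<in>{0}. Abs_fps (psi_t a 0) $ i * (fps_X ^ i) $ n)"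
      by (rule sum.mono_neutral_right) (auto simp: psi_t_def)
    also have "\<dots> = (if n = 0 then 1 else 0)" using a0_pos[OF aK] by (simp add: psi_t_def p0)
    finally show "(fps_X::real fps) $ Suc n = (\<Sum>i = 0..n. Abs_fps (psi_t a 0) $ i * (fps_X ^ i) $ n)"
      by simp
  qed simp
  then have X: "fps_nth (lagrange_sol (psi_t a 0)) = (\<lambda>n. if n = 1 then 1 else 0)"
    by (simp add: fun_eq_iff fps_X_nth)
  have kp: "kh_prob_g (fps_nth (lagrange_sol a)) 0 = (\<lambda>n. if n = 1 then 1 else 0)"
    by (simp add: fun_eq_iff kh_prob_g_def)
  have ser: "(\<lambda>n. of_real (if n = 1 then 1 else 0) * z ^ n) = (\<lambda>n. if n = 1 then z ^ n else 0)"
    by auto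
  have S: "(\<lambda>n. of_real (if n = 1 then 1 else 0) * z ^ n) sums z"
    unfolding ser using sums_single[of 1 "\<lambda>n. z ^ n"] by simp
  then have "ps_eval (\<lambda>n. if n = 1 then 1 else 0) z = z" by (simp add: ps_eval_def sums_iff)
  then show "(\<lambda>n. of_real (kh_prob_g (fps_nth (lagrange_sol a)) (0 / ps_eval a 0) n) * z ^ n) sums
                 ps_eval (fps_nth (lagrange_sol (psi_t a 0))) z"
    using S by (simp add: X kp)
qed

theorem proposition6p3:
  fixes a :: "nat \<Rightarrow> real"
  assumes "in_K a"
  shows "(\<forall>t. 0 < t \<and> ereal t < conv_radius a \<longrightarrow>
            (\<forall>z::complex. norm z \<le> 1 \<longrightarrow>
               (\<lambda>n. of_real (fps_nth (lagrange_sol (psi_t a t)) n) * z ^ n) sums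
                 (ps_eval (fps_nth (lagrange_sol a)) (of_real (t / ps_eval a t) * z) / of_real t))
          \<and> (\<lambda>z::complex. ps_eval (fps_nth (lagrange_sol (psi_t a t))) z) holomorphic_on ball 0 1
          \<and> continuous_on (cball 0 1) (\<lambda>z::complex. ps_eval (fps_nth (lagrange_sol (psi_t a t))) z)
          \<and> (\<lambda>z::complex. ps_eval (fps_nth (lagrange_sol (psi_t a t))) z) ` ball 0 1 \<subseteq> ball 0 1)
       \<and> (K_star a \<longrightarrow> (\<forall>\<tau>. 0 < \<tau> \<and> ereal \<tau> < conv_radius a \<and> kh_mean a \<tau> = 1 \<longrightarrow>
            (\<forall>t\<in>{0..\<tau>}. \<forall>z::complex. norm z \<le> 1 \<longrightarrow>
               (\<lambda>n. of_real (kh_prob_g (fps_nth (lagrange_sol a)) (t / ps_eval a t) n) * z ^ n) sums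
                 ps_eval (fps_nth (lagrange_sol (psi_t a t))) z)))
       \<and> (\<not> K_star a \<longrightarrow> (\<forall>t. 0 < t \<and> ereal t < conv_radius a \<longrightarrow>
            (\<forall>z::complex. norm z \<le> 1 \<longrightarrow>
               (\<lambda>n. of_real (kh_prob_g (fps_nth (lagrange_sol a)) (t / ps_eval a t) n) * z ^ n) sums
                 ps_eval (fps_nth (lagrange_sol (psi_t a t))) z)))"
proof -
  have P1: "\<forall>t. 0 < t \<and> ereal t < conv_radius a \<longrightarrow>
            (\<forall>z::complex. norm z \<le> 1 \<longrightarrow>
               (\<lambda>n. of_real (fps_nth (lagrange_sol (psi_t a t)) n) * z ^ n) sums
                 (ps_eval (fps_nth (lagrange_sol a)) (of_real (t / ps_eval a t) * z) / of_real t))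
          \<and> (\<lambda>z::complex. ps_eval (fps_nth (lagrange_sol (psi_t a t))) z) holomorphic_on ball 0 1
          \<and> continuous_on (cball 0 1) (\<lambda>z::complex. ps_eval (fps_nth (lagrange_sol (psi_t a t))) z)
          \<and> (\<lambda>z::complex. ps_eval (fps_nth (lagrange_sol (psi_t a t))) z) ` ball 0 1 \<subseteq> ball 0 1"
    using part1[OF assms] by blast
  have P2: "K_star a \<longrightarrow> (\<forall>\<tau>. 0 < \<tau> \<and> ereal \<tau> < conv_radius a \<and> kh_mean a \<tau> = 1 \<longrightarrow>
            (\<forall>t\<in>{0..\<tau>}. \<forall>z::complex. norm z \<le> 1 \<longrightarrow>
               (\<lambda>n. of_real (kh_prob_g (fps_nth (lagrange_sol a)) (t / ps_eval a t) n) * z ^ n) sums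
                 ps_eval (fps_nth (lagrange_sol (psi_t a t))) z))"
  proof (intro impI allI ballI)
  fix \<tau> t and z :: complex
  assume Ks: "K_star a"
  assume tau: "0 < \<tau> \<and> ereal \<tau> < conv_radius a \<and> kh_mean a \<tau> = 1" and t: "t \<in> {0..\<tau>}"
    and z: "norm z \<le> 1"
  show "(\<lambda>n. of_real (kh_prob_g (fps_nth (lagrange_sol a)) (t / ps_eval a t) n) * z ^ n) sums
                 ps_eval (fps_nth (lagrange_sol (psi_t a t))) z"
  proof (cases "t = 0")
    case True then show ?thesis using part_zero[OF assms] z by simp
  next
    case False
    then have t0: "0 < t" using t by simp
    have tR: "ereal t < conv_radius a"
    proof -
      have "ereal t \<le> ereal \<tau>" using t by simp
      then show ?thesis using tau by (metis le_less_trans)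
    qed
    have m1: "S1 a x / psi a x < 1" if "0 < x" "x < t" for x
    proof -
      have "S1 a x / psi a x < S1 a \<tau> / psi a \<tau>"
        by (rule mean_strict_mono[OF assms that(1)]) (use that t tau in auto)
      also have "\<dots> = 1" using kh_mean_eq[OF assms, of \<tau>] tau by simp
      finally show ?thesis .
    qed
    show ?thesis using part_sum[OF assms t0 tR m1] z by blast
  qed
  qed
  have P3: "\<not> K_star a \<longrightarrow> (\<forall>t. 0 < t \<and> ereal t < conv_radius a \<longrightarrow>
            (\<forall>z::complex. norm z \<le> 1 \<longrightarrow>
               (\<lambda>n. of_real (kh_prob_g (fps_nth (lagrange_sol a)) (t / ps_eval a t) n) * z ^ n) sums
                 ps_eval (fps_nth (lagrange_sol (psi_t a t))) z))"
  proof (intro impI allI)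
  fix t and z :: complex
  assume nK: "\<not> K_star a" and t: "0 < t \<and> ereal t < conv_radius a" and z: "norm z \<le> 1"
  have m1: "S1 a x / psi a x < 1" if "0 < x" "x < t" for x
  proof (rule notKstar_mean[OF assms nK])
    have "t \<in> Iconv a" using t by (simp add: Iconv_iff[OF assms])
    then show "x \<in> Iconv a" using Iconv_lt[OF assms, of t x] that by simp
  qed
  show "(\<lambda>n. of_real (kh_prob_g (fps_nth (lagrange_sol a)) (t / ps_eval a t) n) * z ^ n) sums
                 ps_eval (fps_nth (lagrange_sol (psi_t a t))) z"
    using part_sum[OF assms _ _ m1] t z by blast
  qed
  show ?thesis using P1 P2 P3 by blast
qed

end
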